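(* Let $\mathcal H$ be a real Hilbert space. Let $\Psi: \mathcal H \to \mathbb R \cup \{+\infty\}$ be proper, lower-semicontinuous and convex, and let $\Phi: \mathcal H \to \mathbb R$ be convex and continuously differentiable with $L$-Lipschitz continuous gradient; set $\Theta=\Psi+\Phi$ and suppose $\operatorname{argmin}\Theta\neq\emptyset$. Let $\alpha>3$ and $0<s<\frac1L$, and let $(x_k)$ be generated by: given arbitrary $x_0,x_1\in\mathcal H$, for $k\ge1$, $$y_k = x_k + \frac{k-1}{k+\alpha-1}(x_k-x_{k-1}),\qquad x_{k+1} = \operatorname{prox}_{s\Psi}\big(y_k - s\nabla\Phi(y_k)\big).$$ Let $x^*\in\operatorname{argmin}\Theta$, and for $k\ge1$ define $z_k = x_k + \frac{k-1}{\alpha-1}(x_k-x_{k-1})$ and $$\mathcal E(k) = \frac{2s}{\alpha-1}(k+\alpha-2)^2\big(\Theta(x_k)-\Theta(x^* )\big) + (\alpha-1)\|z_k-x^*\|^2.$$ Then $$\sum_{k=1}^\infty k\big(\Theta(x_k)-\Theta(x^* )\big) \le \frac{(\alpha-1)\mathcal E(1)}{2s(\alpha-3)}.$$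
   Context: $\operatorname{prox}_{s\Psi}(z) = \operatorname{argmin}_{u\in\mathcal H}\{\Psi(u) + \frac{1}{2s}\|u-z\|^2\}$ denotes the proximal operator. *)

theory Defs
  imports "HOL-Analysis.Analysis"
begin

text \<open>Extended-real-valued functions \<open>\<Psi> : H \<Rightarrow> \<real> \<union> {+\<infinity>}\<close> are modelled as
  \<open>'a \<Rightarrow> ereal\<close> never taking the value \<open>-\<infinity>\<close>.\<close>

definition proper_fun :: "('a \<Rightarrow> ereal) \<Rightarrow> bool" where
  "proper_fun f \<longleftrightarrow> (\<forall>x. f x \<noteq> -\<infinity>) \<and> (\<exists>x. f x \<noteq> \<infinity>)"

definition lsc_fun :: "('a::topological_space \<Rightarrow> ereal) \<Rightarrow> bool" where
  "lsc_fun f \<longleftrightarrow> (\<forall>c::real. closed {x. f x \<le> ereal c})"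

definition convex_ereal_fun :: "('a::real_vector \<Rightarrow> ereal) \<Rightarrow> bool" where
  "convex_ereal_fun f \<longleftrightarrow>
     (\<forall>x y t. 0 \<le> t \<and> t \<le> 1 \<longrightarrow>
        f ((1 - t) *\<^sub>R x + t *\<^sub>R y) \<le> ereal (1 - t) * f x + ereal t * f y)"

definition argmin_set :: "('a \<Rightarrow> ereal) \<Rightarrow> 'a set" where
  "argmin_set f = {u. \<forall>v. f u \<le> f v}"

text \<open>The proximal operator, as the set of minimizers of
  \<open>u \<mapsto> \<Psi> u + 1/(2s) \<parallel>u - z\<parallel>\<^sup>2\<close> (a singleton for proper lsc convex \<open>\<Psi>\<close>, \<open>s > 0\<close>).\<close>
definition prox_set :: "real \<Rightarrow> ('a::real_normed_vector \<Rightarrow> ereal) \<Rightarrow> 'a \<Rightarrow> 'a set" where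
  "prox_set s \<Psi> z = argmin_set (\<lambda>u. \<Psi> u + ereal (1 / (2 * s) * (norm (u - z))\<^sup>2))"

end

theory Submission
  imports Defs
begin

lemma line_deriv:
  fixes \<Phi> :: "'a::real_inner \<Rightarrow> real"
  assumes "\<And>u. (\<Phi> has_derivative (\<lambda>h. g u \<bullet> h)) (at u)"
  shows "((\<lambda>t. \<Phi> (y + t *\<^sub>R d)) has_real_derivative (g (y + t *\<^sub>R d) \<bullet> d)) (at t)"
proof -
  have 1: "((\<lambda>t. y + t *\<^sub>R d) has_derivative (\<lambda>h. h *\<^sub>R d)) (at t)"
    by (auto intro!: derivative_eq_intros)
  have "((\<Phi> \<circ> (\<lambda>t. y + t *\<^sub>R d)) has_derivative ((\<lambda>h. g (y + t *\<^sub>R d) \<bullet> h) \<circ> (\<lambda>h. h *\<^sub>R d))) (at t)"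
    by (rule diff_chain_at[OF 1 assms])
  then show ?thesis
    unfolding has_field_derivative_def by (simp add: o_def mult_commute_abs)
qed

lemma grad_ineq:
  fixes \<Phi> :: "'a::real_inner \<Rightarrow> real"
  assumes cv: "convex_on UNIV \<Phi>" and d: "\<And>u. (\<Phi> has_derivative (\<lambda>h. g u \<bullet> h)) (at u)"
  shows "\<Phi> y + g y \<bullet> (u - y) \<le> \<Phi> u"
proof -
  let ?f = "\<lambda>t. \<Phi> (y + t *\<^sub>R (u - y))"
  have c: "convex_on UNIV ?f"
  proof (rule convex_onI)
    fix t a b :: real assume t: "0 < t" "t < 1"
    have "y + ((1 - t) * a + t * b) *\<^sub>R (u - y) = (1 - t) *\<^sub>R (y + a *\<^sub>R (u - y)) + t *\<^sub>R (y + b *\<^sub>R (u - y))"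
      by (simp add: algebra_simps)
    then show "?f ((1 - t) *\<^sub>R a + t *\<^sub>R b) \<le> (1 - t) * ?f a + t * ?f b"
      using convex_onD[OF cv, of t "y + a *\<^sub>R (u - y)" "y + b *\<^sub>R (u - y)"] t by simp
  qed auto
  have "?f 1 - ?f 0 \<ge> (g (y + 0 *\<^sub>R (u - y)) \<bullet> (u - y)) * (1 - 0)"
    by (rule convex_on_imp_above_tangent[OF c]) (use line_deriv[OF d, of y "u - y" 0] in \<open>auto intro: has_field_derivative_at_within\<close>)
  then show ?thesis by simp
qed

lemma descent:
  fixes \<Phi> :: "'a::real_inner \<Rightarrow> real"
  assumes d: "\<And>u. (\<Phi> has_derivative (\<lambda>h. g u \<bullet> h)) (at u)"
    and lip: "\<And>u v. norm (g u - g v) \<le> L * norm (u - v)"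
  shows "\<Phi> q \<le> \<Phi> y + g y \<bullet> (q - y) + L / 2 * (norm (q - y))\<^sup>2"
proof -
  define dd where "dd = q - y"
  define h where "h = (\<lambda>t. \<Phi> (y + t *\<^sub>R dd) - (t * (g y \<bullet> dd) + L / 2 * t\<^sup>2 * (norm dd)\<^sup>2))"
  have "h 0 \<ge> h 1"
  proof (rule DERIV_nonpos_imp_nonincreasing[of 0 1 h])
    fix t :: real assume t: "0 \<le> t" "t \<le> 1"
    have D: "(h has_real_derivative (g (y + t *\<^sub>R dd) \<bullet> dd - g y \<bullet> dd - L * t * (norm dd)\<^sup>2)) (at t)"
    proof -
      have Q: "((\<lambda>t. t * (g y \<bullet> dd) + L / 2 * t\<^sup>2 * (norm dd)\<^sup>2) has_real_derivative (g y \<bullet> dd + L * t * (norm dd)\<^sup>2)) (at t)"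
        by (auto intro!: derivative_eq_intros simp: power2_eq_square)
      show ?thesis unfolding h_def using DERIV_diff[OF line_deriv[OF d] Q] by (simp add: algebra_simps)
    qed
    have "g (y + t *\<^sub>R dd) \<bullet> dd - g y \<bullet> dd = (g (y + t *\<^sub>R dd) - g y) \<bullet> dd"
      by (simp add: inner_diff_left)
    also have "\<dots> \<le> norm (g (y + t *\<^sub>R dd) - g y) * norm dd"
      by (rule norm_cauchy_schwarz)
    also have "\<dots> \<le> L * norm (t *\<^sub>R dd) * norm dd"
      using lip[of "y + t *\<^sub>R dd" y] by (simp add: mult_right_mono)
    also have "\<dots> = L * t * (norm dd)\<^sup>2" using t by (simp add: power2_eq_square)
    finally have le: "g (y + t *\<^sub>R dd) \<bullet> dd - g y \<bullet> dd \<le> L * t * (norm dd)\<^sup>2" .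
    show "\<exists>y. (h has_real_derivative y) (at t) \<and> y \<le> 0"
    proof -
      have "g (y + t *\<^sub>R dd) \<bullet> dd - g y \<bullet> dd - L * t * (norm dd)\<^sup>2 \<le> 0" using le by simp
      then show ?thesis using D by blast
    qed
  qed simp
  then show ?thesis unfolding h_def dd_def by simp
qed

lemma norm_add_scale_sq:
  fixes x v :: "'a::real_inner"
  shows "(norm (x + t *\<^sub>R v))\<^sup>2 = (norm x)\<^sup>2 + 2 * t * (x \<bullet> v) + t\<^sup>2 * (norm v)\<^sup>2"
  unfolding power2_norm_eq_inner by (simp add: inner_add_left inner_add_right inner_commute[of v x] algebra_simps power2_eq_square)

lemma eps_le:
  fixes a b K :: real
  assumes K: "K \<ge> 0" and h: "\<And>t. 0 < t \<Longrightarrow> t \<le> 1 \<Longrightarrow> a \<le> b + t * K"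
  shows "a \<le> b"
proof (rule ccontr)
  assume "\<not> a \<le> b"
  then have ab: "a - b > 0" by simp
  define t where "t = min 1 ((a - b) / (2 * (K + 1)))"
  have t0: "0 < t" "t \<le> 1" using ab K by (auto simp: t_def)
  have "t \<le> (a - b) / (2 * (K + 1))" by (simp add: t_def)
  then have "t * K \<le> (a - b) / (2 * (K + 1)) * K" using K by (rule mult_right_mono)
  also have "\<dots> < a - b"
  proof -
    have "0 < (a - b) * (K + 2)" using ab K by simp
    then show ?thesis using K by (simp add: field_simps algebra_simps)
  qed
  finally show False using h[OF t0] by simp
qed

lemma prox_fin:
  fixes \<Psi> :: "'a::real_inner \<Rightarrow> ereal"
  assumes pr: "proper_fun \<Psi>" and p: "p \<in> prox_set s \<Psi> w"
  shows "\<bar>\<Psi> p\<bar> \<noteq> \<infinity>"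
proof -
  obtain q where q: "\<Psi> q \<noteq> \<infinity>" using pr unfolding proper_fun_def by auto
  have "\<Psi> p + ereal (1 / (2 * s) * (norm (p - w))\<^sup>2) \<le> \<Psi> q + ereal (1 / (2 * s) * (norm (q - w))\<^sup>2)"
    using p unfolding prox_set_def argmin_set_def by auto
  moreover have "\<Psi> q + ereal (1 / (2 * s) * (norm (q - w))\<^sup>2) < \<infinity>" using q by auto
  ultimately have "\<Psi> p \<noteq> \<infinity>" by auto
  moreover have "\<Psi> p \<noteq> -\<infinity>" using pr unfolding proper_fun_def by auto
  ultimately show ?thesis by auto
qed

lemma prox_ineq:
  fixes \<Psi> :: "'a::real_inner \<Rightarrow> ereal"
  assumes pr: "proper_fun \<Psi>" and cv: "convex_ereal_fun \<Psi>" and s: "s > 0"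
    and p: "p \<in> prox_set s \<Psi> w" and u: "\<Psi> u \<noteq> \<infinity>"
  shows "real_of_ereal (\<Psi> p) \<le> real_of_ereal (\<Psi> u) + (1 / s) * ((p - w) \<bullet> (u - p))"
proof -
  define a where "a = real_of_ereal (\<Psi> p)"
  define b where "b = real_of_ereal (\<Psi> u)"
  have pa: "\<Psi> p = ereal a" using prox_fin[OF pr p] unfolding a_def by (cases "\<Psi> p") auto
  have ub: "\<Psi> u = ereal b" using u pr unfolding b_def proper_fun_def by (cases "\<Psi> u") auto
  let ?K = "1 / (2 * s) * (norm (u - p))\<^sup>2"
  show ?thesis unfolding a_def[symmetric] b_def[symmetric]
  proof (rule eps_le[of ?K])
    show "?K \<ge> 0" using s by simp
    fix t :: real assume t: "0 < t" "t \<le> 1"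
    define v where "v = (1 - t) *\<^sub>R p + t *\<^sub>R u"
    have "\<Psi> v \<le> ereal (1 - t) * \<Psi> p + ereal t * \<Psi> u"
      using cv t unfolding convex_ereal_fun_def v_def by auto
    then have Pv: "\<Psi> v \<le> ereal ((1 - t) * a + t * b)" by (simp add: pa ub)
    have "\<Psi> p + ereal (1 / (2 * s) * (norm (p - w))\<^sup>2) \<le> \<Psi> v + ereal (1 / (2 * s) * (norm (v - w))\<^sup>2)"
      using p unfolding prox_set_def argmin_set_def by auto
    also have "\<dots> \<le> ereal ((1 - t) * a + t * b) + ereal (1 / (2 * s) * (norm (v - w))\<^sup>2)"
      using Pv by (rule add_right_mono)
    finally have ineq: "a + 1 / (2 * s) * (norm (p - w))\<^sup>2 \<le> (1 - t) * a + t * b + 1 / (2 * s) * (norm (v - w))\<^sup>2"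
      by (simp add: pa)
    have vw: "v - w = (p - w) + t *\<^sub>R (u - p)" by (simp add: v_def algebra_simps)
    have nv: "(norm (v - w))\<^sup>2 = (norm (p - w))\<^sup>2 + 2 * t * ((p - w) \<bullet> (u - p)) + t\<^sup>2 * (norm (u - p))\<^sup>2"
      unfolding vw by (rule norm_add_scale_sq)
    have "t * a \<le> t * b + 1 / (2 * s) * (2 * t * ((p - w) \<bullet> (u - p)) + t\<^sup>2 * (norm (u - p))\<^sup>2)"
      using ineq unfolding nv by (simp add: algebra_simps)
    also have "\<dots> = t * (b + (1 / s) * ((p - w) \<bullet> (u - p)) + t * ?K)"
      using s by (simp add: field_simps power2_eq_square)
    finally show "a \<le> b + (1 / s) * ((p - w) \<bullet> (u - p)) + t * ?K"
      using t by simp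
  qed
qed

lemma key_ineq:
  fixes \<Psi> :: "'a::real_inner \<Rightarrow> ereal" and \<Phi> :: "'a \<Rightarrow> real"
  assumes pr: "proper_fun \<Psi>" and cv: "convex_ereal_fun \<Psi>"
    and \<Phi>c: "convex_on UNIV \<Phi>" and d: "\<And>u. (\<Phi> has_derivative (\<lambda>h. g u \<bullet> h)) (at u)"
    and lip: "\<And>u v. norm (g u - g v) \<le> L * norm (u - v)"
    and s: "0 < s" and sL: "s * L \<le> 1"
    and p: "p \<in> prox_set s \<Psi> (y - s *\<^sub>R g y)" and u: "\<Psi> u \<noteq> \<infinity>"
  shows "real_of_ereal (\<Psi> p) + \<Phi> p \<le> real_of_ereal (\<Psi> u) + \<Phi> u
           + (1 / s) * ((y - p) \<bullet> (y - u)) - 1 / (2 * s) * (norm (p - y))\<^sup>2"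
proof -
  define A where "A = (y - p) \<bullet> (y - u)"
  define N where "N = (norm (p - y))\<^sup>2"
  have N0: "N \<ge> 0" by (simp add: N_def)
  have P: "real_of_ereal (\<Psi> p) \<le> real_of_ereal (\<Psi> u) + (1 / s) * ((p - (y - s *\<^sub>R g y)) \<bullet> (u - p))"
    by (rule prox_ineq[OF pr cv s p u])
  have "(p - (y - s *\<^sub>R g y)) \<bullet> (u - p) = (p - y) \<bullet> (u - p) + s * (g y \<bullet> (u - p))"
    by (simp add: inner_diff_left inner_add_left)
  also have "(p - y) \<bullet> (u - p) = A - N"
  proof -
    have "u - p = (u - y) - (p - y)" by simp
    then have "(p - y) \<bullet> (u - p) = (p - y) \<bullet> (u - y) - (p - y) \<bullet> (p - y)"
      by (simp only: inner_diff_right)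
    moreover have "(p - y) \<bullet> (u - y) = A" unfolding A_def
      by (metis inner_minus_left inner_minus_right minus_diff_eq minus_minus)
    ultimately show ?thesis by (simp add: N_def power2_norm_eq_inner)
  qed
  finally have E: "(p - (y - s *\<^sub>R g y)) \<bullet> (u - p) = A - N + s * (g y \<bullet> (u - p))" .
  have E2: "(1 / s) * (A - N + s * (g y \<bullet> (u - p))) = A / s - N / s + g y \<bullet> (u - p)"
    using s by (simp add: field_simps)
  have P2: "real_of_ereal (\<Psi> p) \<le> real_of_ereal (\<Psi> u) + A / s - N / s + g y \<bullet> (u - p)"
    using P unfolding E E2 by simp
  have D: "\<Phi> p \<le> \<Phi> y + g y \<bullet> (p - y) + L / 2 * N"
    unfolding N_def by (rule descent[OF d lip])
  have G: "\<Phi> y + g y \<bullet> (u - y) \<le> \<Phi> u" by (rule grad_ineq[OF \<Phi>c d])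
  have GG: "g y \<bullet> (u - p) + g y \<bullet> (p - y) = g y \<bullet> (u - y)"
    by (simp add: inner_diff_right)
  have LN: "L / 2 * N \<le> N / (2 * s)"
  proof -
    have "L \<le> 1 / s" using sL s by (simp add: field_simps mult.commute)
    then have "L * N \<le> (1 / s) * N" using N0 by (rule mult_right_mono)
    then show ?thesis by simp
  qed
  have "real_of_ereal (\<Psi> p) + \<Phi> p \<le> real_of_ereal (\<Psi> u) + \<Phi> u + A / s - N / s + N / (2 * s)"
    using P2 D G GG LN by linarith
  also have "\<dots> = real_of_ereal (\<Psi> u) + \<Phi> u + (1 / s) * A - 1 / (2 * s) * N"
    using s by (simp add: field_simps)
  finally show ?thesis unfolding A_def N_def .
qed

lemma lyap_step:
  fixes xk xk1 xprev xs yk :: "'a::real_inner" and \<alpha> s k Tk Tk1 :: real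
  assumes \<alpha>: "\<alpha> > 3" and s: "s > 0" and k: "k \<ge> 1"
    and yk: "yk = xk + ((k - 1) / (k + \<alpha> - 1)) *\<^sub>R (xk - xprev)"
    and A: "Tk1 \<le> Tk + (1 / s) * ((yk - xk1) \<bullet> (yk - xk)) - 1 / (2 * s) * (norm (xk1 - yk))\<^sup>2"
    and B: "Tk1 \<le> (1 / s) * ((yk - xk1) \<bullet> (yk - xs)) - 1 / (2 * s) * (norm (xk1 - yk))\<^sup>2"
    and T0: "Tk \<ge> 0"
  shows "2 * s / (\<alpha> - 1) * (k + 1 + \<alpha> - 2)\<^sup>2 * Tk1
           + (\<alpha> - 1) * (norm (xk1 + (k / (\<alpha> - 1)) *\<^sub>R (xk1 - xk) - xs))\<^sup>2
           + 2 * s * (\<alpha> - 3) / (\<alpha> - 1) * k * Tk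
         \<le> 2 * s / (\<alpha> - 1) * (k + \<alpha> - 2)\<^sup>2 * Tk
           + (\<alpha> - 1) * (norm (xk + ((k - 1) / (\<alpha> - 1)) *\<^sub>R (xk - xprev) - xs))\<^sup>2"
proof -
  define e where "e = xk - xprev"
  define w where "w = xk - xs"
  define D where "D = xk1 - yk"
  define r where "r = \<alpha> - 1"
  define q where "q = k + \<alpha> - 1"
  have r0: "r > 0" and q0: "q > 0" and qr: "q = r + k" using \<alpha> k by (auto simp: r_def q_def)
  define \<beta> where "\<beta> = (k - 1) / q"
  define \<gamma> where "\<gamma> = (k - 1) / r"
  define c where "c = q / r"
  define \<mu> where "\<mu> = k / r"
  define lam where "lam = k / q"
  define De where "De = D \<bullet> e"
  define Dw where "Dw = D \<bullet> w"
  define N where "N = (norm D)\<^sup>2"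
  define Q where "Q = Dw + \<gamma> * De"
  have a1: "\<alpha> - 1 > 0" using \<alpha> by auto
  have c0: "c > 0" using r0 q0 by (simp add: c_def)
  have l01: "0 \<le> lam" "lam \<le> 1" using q0 qr r0 k by (auto simp: lam_def field_simps)
  have yk': "yk = xk + \<beta> *\<^sub>R e" using yk by (simp add: \<beta>_def e_def q_def)
  have xk1: "xk1 = xk + \<beta> *\<^sub>R e + D" using yk' by (simp add: D_def)
  have mD: "yk - xk1 = - D" by (simp add: D_def)
  have ykk: "yk - xk = \<beta> *\<^sub>R e" by (simp add: yk')
  have yks: "yk - xs = w + \<beta> *\<^sub>R e" by (simp add: yk' w_def)
  have iA: "(yk - xk1) \<bullet> (yk - xk) = - \<beta> * De"
    unfolding mD ykk De_def by simp
  have iB: "(yk - xk1) \<bullet> (yk - xs) = - (Dw + \<beta> * De)"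
    unfolding mD yks Dw_def De_def by (simp add: inner_add_right)
  have nD: "(norm (xk1 - yk))\<^sup>2 = N" by (simp add: D_def N_def)
  have A': "Tk1 \<le> Tk - \<beta> * De / s - N / (2 * s)" using A unfolding iA nD by simp
  have B': "Tk1 \<le> - (Dw + \<beta> * De) / s - N / (2 * s)" using B unfolding iB nD by simp
  have "lam * Tk1 + (1 - lam) * Tk1 \<le> lam * (Tk - \<beta> * De / s - N / (2 * s)) + (1 - lam) * (- (Dw + \<beta> * De) / s - N / (2 * s))"
    using l01 A' B' by (intro add_mono mult_left_mono) auto
  also have "\<dots> = lam * Tk - (\<beta> * De + (1 - lam) * Dw) / s - N / (2 * s)"
    using s by (simp add: field_simps)
  also have "\<beta> * De + (1 - lam) * Dw = Q / c"
  proof -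
    have hb: "\<beta> = \<gamma> / c" unfolding \<beta>_def \<gamma>_def c_def using r0 q0 by (simp add: field_simps)
    have hl: "1 - lam = 1 / c" unfolding lam_def c_def using r0 q0 qr by (simp add: field_simps)
    show ?thesis unfolding hb hl Q_def using c0 by (simp add: field_simps)
  qed
  also have "lam * Tk - Q / c / s - N / (2 * s) = lam * Tk - Q / (s * c) - N / (2 * s)"
    by (simp add: mult.commute)
  finally have S1: "Tk1 \<le> lam * Tk - Q / (s * c) - N / (2 * s)" by (simp add: algebra_simps)
  have zk: "xk + ((k - 1) / (\<alpha> - 1)) *\<^sub>R (xk - xprev) - xs = w + \<gamma> *\<^sub>R e"
    by (simp add: w_def e_def \<gamma>_def r_def)
  have "xk1 + (k / (\<alpha> - 1)) *\<^sub>R (xk1 - xk) - xs = w + ((1 + \<mu>) * \<beta>) *\<^sub>R e + (1 + \<mu>) *\<^sub>R D"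
    unfolding xk1 \<mu>_def w_def r_def by (simp add: algebra_simps)
  also have mc: "1 + \<mu> = c" using r0 qr unfolding \<mu>_def c_def by (simp add: field_simps)
  also have "c * \<beta> = \<gamma>" using r0 q0 unfolding c_def \<beta>_def \<gamma>_def by (simp add: field_simps)
  finally have zk1: "xk1 + (k / (\<alpha> - 1)) *\<^sub>R (xk1 - xk) - xs = (w + \<gamma> *\<^sub>R e) + c *\<^sub>R D"
    by (simp add: algebra_simps)
  define H0 where "H0 = (norm (w + \<gamma> *\<^sub>R e))\<^sup>2"
  have H1: "(norm ((w + \<gamma> *\<^sub>R e) + c *\<^sub>R D))\<^sup>2 = H0 + 2 * c * Q + c\<^sup>2 * N"
    unfolding norm_add_scale_sq H0_def Q_def Dw_def De_def N_def
    by (simp add: inner_add_left inner_add_right inner_commute)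
  define K where "K = 2 * s * c\<^sup>2 * (\<alpha> - 1)"
  have K0: "K > 0" using s c0 a1 by (simp add: K_def)
  have "K * Tk1 \<le> K * (lam * Tk - Q / (s * c) - N / (2 * s))"
    using S1 K0 by (simp add: mult_left_mono)
  also have "\<dots> = 2 * s * (c\<^sup>2 * (\<alpha> - 1) * lam) * Tk - (\<alpha> - 1) * (2 * c * Q + c\<^sup>2 * N)"
    using c0 s unfolding K_def by (simp add: field_simps power2_eq_square)
  also have "c\<^sup>2 * (\<alpha> - 1) * lam = ((k + \<alpha> - 1) * k) / (\<alpha> - 1)"
  proof -
    have "c\<^sup>2 * r * lam = q * k / r" unfolding lam_def c_def using r0 q0 by (simp add: field_simps power2_eq_square)
    then show ?thesis by (simp add: r_def q_def)
  qed
  also have "2 * s * (((k + \<alpha> - 1) * k) / (\<alpha> - 1)) * Tk = 2 * s / (\<alpha> - 1) * ((k + \<alpha> - 1) * k) * Tk"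
    by simp
  finally have S2: "K * Tk1 \<le> 2 * s / (\<alpha> - 1) * ((k + \<alpha> - 1) * k) * Tk - (\<alpha> - 1) * (2 * c * Q + c\<^sup>2 * N)" .
  have KK: "K = 2 * s / (\<alpha> - 1) * (k + 1 + \<alpha> - 2)\<^sup>2"
    using r0 unfolding K_def c_def by (simp add: field_simps power2_eq_square r_def[symmetric] q_def)
  have poly: "(k + \<alpha> - 1) * k \<le> (k + \<alpha> - 2)\<^sup>2 - (\<alpha> - 3) * k"
  proof -
    have "0 \<le> (\<alpha> - 2) * (\<alpha> - 2)" by simp
    then show ?thesis by (simp add: power2_eq_square algebra_simps)
  qed
  have "2 * s / (\<alpha> - 1) * ((k + \<alpha> - 1) * k) * Tk \<le> 2 * s / (\<alpha> - 1) * ((k + \<alpha> - 2)\<^sup>2 - (\<alpha> - 3) * k) * Tk"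
    using poly s a1 T0 by (intro mult_right_mono mult_left_mono) auto
  also have "\<dots> = 2 * s / (\<alpha> - 1) * (k + \<alpha> - 2)\<^sup>2 * Tk - 2 * s * (\<alpha> - 3) / (\<alpha> - 1) * k * Tk"
  proof -
    have "2 * s / (\<alpha> - 1) * ((k + \<alpha> - 2)\<^sup>2 - (\<alpha> - 3) * k) * Tk
        = 2 * s / (\<alpha> - 1) * (k + \<alpha> - 2)\<^sup>2 * Tk - 2 * s / (\<alpha> - 1) * ((\<alpha> - 3) * k) * Tk"
      by (simp only: left_diff_distrib right_diff_distrib)
    moreover have "2 * s / (\<alpha> - 1) * ((\<alpha> - 3) * k) * Tk = 2 * s * (\<alpha> - 3) / (\<alpha> - 1) * k * Tk"
      by simp
    ultimately show ?thesis by simp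
  qed
  finally have S3: "2 * s / (\<alpha> - 1) * ((k + \<alpha> - 1) * k) * Tk \<le> \<dots>" .
  show ?thesis unfolding zk zk1 H1 H0_def[symmetric] KK[symmetric]
    using S2 S3 by (simp add: algebra_simps)
qed

theorem fact3:
  fixes \<Psi> :: "'a::{real_inner, complete_space} \<Rightarrow> ereal"
    and \<Phi> :: "'a \<Rightarrow> real"
    and g\<Phi> :: "'a \<Rightarrow> 'a"
    and L s \<alpha> :: real
    and x y :: "nat \<Rightarrow> 'a"
    and xstar :: 'a
  assumes \<Psi>_proper: "proper_fun \<Psi>"
    and \<Psi>_lsc: "lsc_fun \<Psi>"
    and \<Psi>_convex: "convex_ereal_fun \<Psi>"
    and \<Phi>_convex: "convex_on UNIV \<Phi>"
    and \<Phi>_grad: "\<And>u. (\<Phi> has_derivative (\<lambda>h. g\<Phi> u \<bullet> h)) (at u)"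
    and grad_cont: "continuous_on UNIV g\<Phi>"
    and L_pos: "L > 0"
    and grad_lip: "\<And>u v. norm (g\<Phi> u - g\<Phi> v) \<le> L * norm (u - v)"
    and argmin_ne: "argmin_set (\<lambda>u. \<Psi> u + ereal (\<Phi> u)) \<noteq> {}"
    and \<alpha>_gt: "\<alpha> > 3"
    and s_pos: "0 < s" and s_lt: "s < 1 / L"
    and y_def: "\<And>k. k \<ge> 1 \<Longrightarrow>
       y k = x k + ((real k - 1) / (real k + \<alpha> - 1)) *\<^sub>R (x k - x (k - 1))"
    and x_step: "\<And>k. k \<ge> 1 \<Longrightarrow>
       x (k + 1) \<in> prox_set s \<Psi> (y k - s *\<^sub>R g\<Phi> (y k))"
    and xstar_min: "xstar \<in> argmin_set (\<lambda>u. \<Psi> u + ereal (\<Phi> u))"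
  shows
    "let \<Theta> = (\<lambda>u. \<Psi> u + ereal (\<Phi> u));
         z = (\<lambda>k. x k + ((real k - 1) / (\<alpha> - 1)) *\<^sub>R (x k - x (k - 1)));
         \<E> = (\<lambda>k. ereal (2 * s / (\<alpha> - 1) * (real k + \<alpha> - 2)\<^sup>2) * (\<Theta> (x k) - \<Theta> xstar)
                  + ereal ((\<alpha> - 1) * (norm (z k - xstar))\<^sup>2))
     in (\<Sum>k. ereal (real (k + 1)) * (\<Theta> (x (k + 1)) - \<Theta> xstar))
          \<le> ereal ((\<alpha> - 1) / (2 * s * (\<alpha> - 3))) * \<E> 1"
proof -
  define \<Theta> where "\<Theta> = (\<lambda>u. \<Psi> u + ereal (\<Phi> u))"
  define z where "z = (\<lambda>k. x k + ((real k - 1) / (\<alpha> - 1)) *\<^sub>R (x k - x (k - 1)))"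
  define P where "P = (\<lambda>v. real_of_ereal (\<Psi> v))"
  have sL: "s * L \<le> 1" using s_lt L_pos s_pos by (simp add: field_simps)
  have nm: "\<And>v. \<Psi> v \<noteq> -\<infinity>" using \<Psi>_proper unfolding proper_fun_def by auto
  obtain q where q: "\<Psi> q \<noteq> \<infinity>" using \<Psi>_proper unfolding proper_fun_def by auto
  have xsfin: "\<Psi> xstar \<noteq> \<infinity>"
  proof
    assume "\<Psi> xstar = \<infinity>"
    then have "\<Theta> xstar = \<infinity>" by (simp add: \<Theta>_def)
    moreover have "\<Theta> xstar \<le> \<Theta> q" using xstar_min unfolding argmin_set_def \<Theta>_def by auto
    moreover have "\<Theta> q \<noteq> \<infinity>" using q nm[of q] by (cases "\<Psi> q") (auto simp: \<Theta>_def)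
    ultimately show False by simp
  qed
  have Pe: "\<And>v. \<Psi> v \<noteq> \<infinity> \<Longrightarrow> \<Psi> v = ereal (P v)"
  proof -
    fix v assume a: "\<Psi> v \<noteq> \<infinity>"
    show "\<Psi> v = ereal (P v)" using a nm[of v] unfolding P_def by (cases "\<Psi> v") auto
  qed
  have Te: "\<And>v. \<Psi> v \<noteq> \<infinity> \<Longrightarrow> \<Theta> v = ereal (P v + \<Phi> v)"
  proof -
    fix v assume "\<Psi> v \<noteq> \<infinity>"
    then have "\<Psi> v = ereal (P v)" by (rule Pe)
    then show "\<Theta> v = ereal (P v + \<Phi> v)" unfolding \<Theta>_def by simp
  qed
  have Tstar: "\<Theta> xstar = ereal (P xstar + \<Phi> xstar)" using Te[OF xsfin] .
  have C0: "(\<alpha> - 1) / (2 * s * (\<alpha> - 3)) > 0" using \<alpha>_gt s_pos by simp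
  show ?thesis
  proof (cases "\<Psi> (x 1) = \<infinity>")
    case True
    have "\<Theta> (x 1) - \<Theta> xstar = \<infinity>" using True Tstar by (simp add: \<Theta>_def)
    moreover have "2 * s / (\<alpha> - 1) * (real 1 + \<alpha> - 2)\<^sup>2 > 0" using \<alpha>_gt s_pos by simp
    ultimately have "ereal (2 * s / (\<alpha> - 1) * (real 1 + \<alpha> - 2)\<^sup>2) * (\<Theta> (x 1) - \<Theta> xstar)
                  + ereal ((\<alpha> - 1) * (norm (z 1 - xstar))\<^sup>2) = \<infinity>" using s_pos \<alpha>_gt by simp
    then have "ereal ((\<alpha> - 1) / (2 * s * (\<alpha> - 3))) * (ereal (2 * s / (\<alpha> - 1) * (real 1 + \<alpha> - 2)\<^sup>2) * (\<Theta> (x 1) - \<Theta> xstar)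
                  + ereal ((\<alpha> - 1) * (norm (z 1 - xstar))\<^sup>2)) = \<infinity>" using C0 s_pos \<alpha>_gt by simp
    note R = this
    show ?thesis unfolding Let_def \<Theta>_def[symmetric] z_def[symmetric] R by simp
  next
    case False
    have fin: "\<And>k. k \<ge> 1 \<Longrightarrow> \<Psi> (x k) \<noteq> \<infinity>"
    proof -
      fix k :: nat assume k: "k \<ge> 1"
      show "\<Psi> (x k) \<noteq> \<infinity>"
      proof (cases "k = 1")
        case True then show ?thesis using False by simp
      next
        case False
        then have "x k = x ((k - 1) + 1)" "k - 1 \<ge> 1" using k by auto
        then show ?thesis using prox_fin[OF \<Psi>_proper x_step[of "k - 1"]] by auto
      qed
    qed
    define th where "th = (\<lambda>k. P (x k) + \<Phi> (x k) - (P xstar + \<Phi> xstar))"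
    have thd: "\<And>k. k \<ge> 1 \<Longrightarrow> \<Theta> (x k) - \<Theta> xstar = ereal (th k)"
      using Te fin Tstar by (simp add: th_def)
    have th0: "\<And>k. k \<ge> 1 \<Longrightarrow> th k \<ge> 0"
    proof -
      fix k :: nat assume k: "k \<ge> 1"
      have "\<Theta> xstar \<le> \<Theta> (x k)" using xstar_min unfolding argmin_set_def \<Theta>_def by auto
      then show "th k \<ge> 0" using Te[OF fin[OF k]] Tstar by (simp add: th_def)
    qed
    define Er where "Er = (\<lambda>k. 2 * s / (\<alpha> - 1) * (real k + \<alpha> - 2)\<^sup>2 * th k + (\<alpha> - 1) * (norm (z k - xstar))\<^sup>2)"
    define C where "C = 2 * s * (\<alpha> - 3) / (\<alpha> - 1)"
    have Cpos: "C > 0" using \<alpha>_gt s_pos by (simp add: C_def)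
    have Er0: "\<And>k. k \<ge> 1 \<Longrightarrow> Er k \<ge> 0"
      using th0 \<alpha>_gt s_pos by (simp add: Er_def)
    have step: "\<And>k. k \<ge> 1 \<Longrightarrow> Er (k + 1) + C * (real k * th k) \<le> Er k"
    proof -
      fix k :: nat assume k: "k \<ge> 1"
      have xs1: "\<Psi> (x (k + 1)) \<noteq> \<infinity>" using fin k by simp
      have A0: "P (x (k + 1)) + \<Phi> (x (k + 1)) \<le> P (x k) + \<Phi> (x k)
           + (1 / s) * ((y k - x (k + 1)) \<bullet> (y k - x k)) - 1 / (2 * s) * (norm (x (k + 1) - y k))\<^sup>2"
        unfolding P_def
        by (rule key_ineq[OF \<Psi>_proper \<Psi>_convex \<Phi>_convex \<Phi>_grad grad_lip s_pos sL x_step[OF k] fin[OF k]])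
      have B0: "P (x (k + 1)) + \<Phi> (x (k + 1)) \<le> P xstar + \<Phi> xstar
           + (1 / s) * ((y k - x (k + 1)) \<bullet> (y k - xstar)) - 1 / (2 * s) * (norm (x (k + 1) - y k))\<^sup>2"
        unfolding P_def
        by (rule key_ineq[OF \<Psi>_proper \<Psi>_convex \<Phi>_convex \<Phi>_grad grad_lip s_pos sL x_step[OF k] xsfin])
      have A: "th (k + 1) \<le> th k + (1 / s) * ((y k - x (k + 1)) \<bullet> (y k - x k)) - 1 / (2 * s) * (norm (x (k + 1) - y k))\<^sup>2"
        using A0 by (simp add: th_def)
      have B: "th (k + 1) \<le> (1 / s) * ((y k - x (k + 1)) \<bullet> (y k - xstar)) - 1 / (2 * s) * (norm (x (k + 1) - y k))\<^sup>2"
        using B0 by (simp add: th_def)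
      have kr: "real k \<ge> 1" using k by simp
      have L: "2 * s / (\<alpha> - 1) * (real k + 1 + \<alpha> - 2)\<^sup>2 * th (k + 1)
           + (\<alpha> - 1) * (norm (x (k + 1) + (real k / (\<alpha> - 1)) *\<^sub>R (x (k + 1) - x k) - xstar))\<^sup>2
           + 2 * s * (\<alpha> - 3) / (\<alpha> - 1) * real k * th k
         \<le> 2 * s / (\<alpha> - 1) * (real k + \<alpha> - 2)\<^sup>2 * th k
           + (\<alpha> - 1) * (norm (x k + ((real k - 1) / (\<alpha> - 1)) *\<^sub>R (x k - x (k - 1)) - xstar))\<^sup>2"
        by (rule lyap_step[OF \<alpha>_gt s_pos kr y_def[OF k] A B th0[OF k]])
      then show "Er (k + 1) + C * (real k * th k) \<le> Er k"
        by (simp add: Er_def z_def C_def algebra_simps)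
    qed
    have tele: "\<And>N. C * (\<Sum>n<N. real (n + 1) * th (n + 1)) \<le> Er 1 - Er (N + 1)"
    proof -
      fix N show "C * (\<Sum>n<N. real (n + 1) * th (n + 1)) \<le> Er 1 - Er (N + 1)"
      proof (induction N)
        case 0 then show ?case by simp
      next
        case (Suc N)
        have "Er (Suc N + 1) + C * (real (N + 1) * th (N + 1)) \<le> Er (N + 1)"
          using step[of "N + 1"] by simp
        then show ?case using Suc.IH by (simp add: distrib_left)
      qed
    qed
    have bnd: "\<And>N. (\<Sum>n<N. real (n + 1) * th (n + 1)) \<le> Er 1 / C"
    proof -
      fix N
      have "C * (\<Sum>n<N. real (n + 1) * th (n + 1)) \<le> Er 1"
        using tele[of N] Er0[of "N + 1"] by simp
      then show "(\<Sum>n<N. real (n + 1) * th (n + 1)) \<le> Er 1 / C"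
        using Cpos by (simp add: field_simps mult.commute)
    qed
    have lhs: "\<And>n. ereal (real (n + 1)) * (\<Theta> (x (n + 1)) - \<Theta> xstar) = ereal (real (n + 1) * th (n + 1))"
      using thd by simp
    have E1: "ereal (2 * s / (\<alpha> - 1) * (real 1 + \<alpha> - 2)\<^sup>2) * (\<Theta> (x 1) - \<Theta> xstar)
                  + ereal ((\<alpha> - 1) * (norm (z 1 - xstar))\<^sup>2) = ereal (Er 1)"
      using thd[of 1] by (simp add: Er_def)
    have Cinv: "(\<alpha> - 1) / (2 * s * (\<alpha> - 3)) * Er 1 = Er 1 / C"
      unfolding C_def by simp
    have "(\<Sum>n. ereal (real (n + 1)) * (\<Theta> (x (n + 1)) - \<Theta> xstar)) \<le> ereal (Er 1 / C)"
      unfolding lhs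
    proof (rule suminf_bound)
      show "\<forall>N. (\<Sum>n<N. ereal (real (n + 1) * th (n + 1))) \<le> ereal (Er 1 / C)"
        using bnd by (simp add: sum_ereal)
      fix n show "0 \<le> ereal (real (n + 1) * th (n + 1))" using th0[of "n + 1"] by simp
    qed
    moreover have fe: "ereal ((\<alpha> - 1) / (2 * s * (\<alpha> - 3))) * ereal (Er 1) = ereal (Er 1 / C)"
      using Cinv by simp
    ultimately show ?thesis unfolding Let_def \<Theta>_def[symmetric] z_def[symmetric] E1 fe
      by simp
  qed
qed

end
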